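(* Let $k$ be a positive integer and let $G$ be a finite, simple, undirected, connected graph of order $n\ge 2$. (a) If $O_{R,k}(G)=\mathcal{M}$, then $\dim_k(G)\le\lfloor n/2\rfloor$. (b) If $\dim_k(G)\ge\lceil n/2\rceil+1$, then $O_{R,k}(G)=\mathcal{B}$.
   Context: $d(x,y)$ is the shortest-path distance and $d_k(x,y)=\min\{d(x,y),k+1\}$. A set $S\subseteq V(G)$ is a distance-$k$ resolving set if for all distinct $x,y\in V(G)$ some $z\in S$ has $d_k(x,z)\ne d_k(y,z)$; $\dim_k(G)$ is the minimum cardinality of a distance-$k$ resolving set. In the Maker-Breaker distance-$k$ resolving game on $G$, Maker and Breaker alternately select a not-yet-chosen vertex; Maker wins if his selected vertices form a distance-$k$ resolving set, Breaker wins otherwise. $O_{R,k}(G)=\mathcal{M}$ if Maker has a winning strategy whether he moves first or second, $\mathcal{B}$ if Breaker has a winning strategy whether she moves first or second, and $\mathcal{N}$ if the first player has a winning strategy. *)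

theory Defs
  imports Main
begin

definition simple_graph :: "'a set \<Rightarrow> ('a \<Rightarrow> 'a \<Rightarrow> bool) \<Rightarrow> bool" where
  "simple_graph V E \<longleftrightarrow> finite V \<and> (\<forall>x y. E x y \<longrightarrow> x \<in> V \<and> y \<in> V)
     \<and> (\<forall>x y. E x y \<longrightarrow> E y x) \<and> (\<forall>x. \<not> E x x)"

fun is_walk :: "('a \<Rightarrow> 'a \<Rightarrow> bool) \<Rightarrow> 'a list \<Rightarrow> bool" where
  "is_walk E [] = False"
| "is_walk E [x] = True"
| "is_walk E (x # y # xs) = (E x y \<and> is_walk E (y # xs))"

definition walk_betw :: "'a set \<Rightarrow> ('a \<Rightarrow> 'a \<Rightarrow> bool) \<Rightarrow> 'a \<Rightarrow> 'a list \<Rightarrow> 'a \<Rightarrow> bool" where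
  "walk_betw V E x p y \<longleftrightarrow> is_walk E p \<and> set p \<subseteq> V \<and> hd p = x \<and> last p = y"

definition connected_graph :: "'a set \<Rightarrow> ('a \<Rightarrow> 'a \<Rightarrow> bool) \<Rightarrow> bool" where
  "connected_graph V E \<longleftrightarrow> (\<forall>x\<in>V. \<forall>y\<in>V. \<exists>p. walk_betw V E x p y)"

definition gdist :: "'a set \<Rightarrow> ('a \<Rightarrow> 'a \<Rightarrow> bool) \<Rightarrow> 'a \<Rightarrow> 'a \<Rightarrow> nat" where
  "gdist V E x y = (LEAST n. \<exists>p. walk_betw V E x p y \<and> length p = Suc n)"

definition dist_k :: "'a set \<Rightarrow> ('a \<Rightarrow> 'a \<Rightarrow> bool) \<Rightarrow> nat \<Rightarrow> 'a \<Rightarrow> 'a \<Rightarrow> nat" where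
  "dist_k V E k x y = min (gdist V E x y) (k + 1)"

definition dk_resolving :: "'a set \<Rightarrow> ('a \<Rightarrow> 'a \<Rightarrow> bool) \<Rightarrow> nat \<Rightarrow> 'a set \<Rightarrow> bool" where
  "dk_resolving V E k S \<longleftrightarrow> S \<subseteq> V \<and>
     (\<forall>x\<in>V. \<forall>y\<in>V. x \<noteq> y \<longrightarrow> (\<exists>z\<in>S. dist_k V E k x z \<noteq> dist_k V E k y z))"

definition dim_k :: "'a set \<Rightarrow> ('a \<Rightarrow> 'a \<Rightarrow> bool) \<Rightarrow> nat \<Rightarrow> nat" where
  "dim_k V E k = (LEAST n. \<exists>S. dk_resolving V E k S \<and> card S = n)"

text \<open>A position is (M, B): the sets of
  vertices chosen so far by Maker and Breaker; the boolean says whether Maker is to move.\<close>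

inductive maker_can_win :: "'a set \<Rightarrow> ('a \<Rightarrow> 'a \<Rightarrow> bool) \<Rightarrow> nat \<Rightarrow> bool \<Rightarrow> 'a set \<Rightarrow> 'a set \<Rightarrow> bool"
  for V E k where
  mw_end: "V - (M \<union> B) = {} \<Longrightarrow> dk_resolving V E k M \<Longrightarrow> maker_can_win V E k t M B"
| mw_maker: "v \<in> V - (M \<union> B) \<Longrightarrow> maker_can_win V E k False (insert v M) B
     \<Longrightarrow> maker_can_win V E k True M B"
| mw_breaker: "V - (M \<union> B) \<noteq> {} \<Longrightarrow> (\<forall>v \<in> V - (M \<union> B). maker_can_win V E k True M (insert v B))
     \<Longrightarrow> maker_can_win V E k False M B"

inductive breaker_can_win :: "'a set \<Rightarrow> ('a \<Rightarrow> 'a \<Rightarrow> bool) \<Rightarrow> nat \<Rightarrow> bool \<Rightarrow> 'a set \<Rightarrow> 'a set \<Rightarrow> bool"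
  for V E k where
  bw_end: "V - (M \<union> B) = {} \<Longrightarrow> \<not> dk_resolving V E k M \<Longrightarrow> breaker_can_win V E k t M B"
| bw_breaker: "v \<in> V - (M \<union> B) \<Longrightarrow> breaker_can_win V E k True M (insert v B)
     \<Longrightarrow> breaker_can_win V E k False M B"
| bw_maker: "V - (M \<union> B) \<noteq> {} \<Longrightarrow> (\<forall>v \<in> V - (M \<union> B). breaker_can_win V E k False (insert v M) B)
     \<Longrightarrow> breaker_can_win V E k True M B"

text \<open>Outcome \<M>: Maker wins whether he moves first or second.
  Outcome \<B>: Breaker wins whether she moves first or second.\<close>
definition outcome_M :: "'a set \<Rightarrow> ('a \<Rightarrow> 'a \<Rightarrow> bool) \<Rightarrow> nat \<Rightarrow> bool" where
  "outcome_M V E k \<longleftrightarrow> maker_can_win V E k True {} {} \<and> maker_can_win V E k False {} {}"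

definition outcome_B :: "'a set \<Rightarrow> ('a \<Rightarrow> 'a \<Rightarrow> bool) \<Rightarrow> nat \<Rightarrow> bool" where
  "outcome_B V E k \<longleftrightarrow> breaker_can_win V E k False {} {} \<and> breaker_can_win V E k True {} {}"

end

theory Submission
  imports Defs
begin

lemma card_ins_le: "card (insert v M) \<le> Suc (card M)"
  by (cases "finite M") (auto simp: card_insert_if)

lemma dim_le: "dk_resolving V E k S \<Longrightarrow> dim_k V E k \<le> card S"
  unfolding dim_k_def by (rule Least_le) blast

lemma card_rem: "finite V \<Longrightarrow> v \<in> V - (M \<union> B) \<Longrightarrow>
   card (V - (insert v M \<union> B)) = card (V - (M \<union> B)) - 1"
  "finite V \<Longrightarrow> v \<in> V - (M \<union> B) \<Longrightarrow>
   card (V - (M \<union> insert v B)) = card (V - (M \<union> B)) - 1"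
proof -
  assume "finite V" "v \<in> V - (M \<union> B)"
  have "V - (insert v M \<union> B) = (V - (M \<union> B)) - {v}" by auto
  then show "card (V - (insert v M \<union> B)) = card (V - (M \<union> B)) - 1"
    using \<open>finite V\<close> \<open>v \<in> V - (M \<union> B)\<close> by (simp add: card_Diff_singleton)
next
  assume "finite V" "v \<in> V - (M \<union> B)"
  have "V - (M \<union> insert v B) = (V - (M \<union> B)) - {v}" by auto
  then show "card (V - (M \<union> insert v B)) = card (V - (M \<union> B)) - 1"
    using \<open>finite V\<close> \<open>v \<in> V - (M \<union> B)\<close> by (simp add: card_Diff_singleton)
qed

lemma rem_pos: "finite V \<Longrightarrow> v \<in> V - (M \<union> B) \<Longrightarrow> card (V - (M \<union> B)) > 0"
  by (metis card_gt_0_iff empty_iff finite_Diff)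

lemma maker_bound:
  assumes "maker_can_win V E k t M B" "finite V"
  shows "\<exists>S. dk_resolving V E k S \<and> card S \<le> card M +
      (if t then (card (V - (M \<union> B)) + 1) div 2 else card (V - (M \<union> B)) div 2)"
  using assms
proof (induction rule: maker_can_win.induct)
  case (mw_end M B t)
  then show ?case by auto
next
  case (mw_maker v M B)
  from mw_maker.IH[OF mw_maker.prems] obtain S where S: "dk_resolving V E k S"
    "card S \<le> card (insert v M) + card (V - (insert v M \<union> B)) div 2" by auto
  have r: "card (V - (insert v M \<union> B)) = card (V - (M \<union> B)) - 1"
    by (rule card_rem(1)[OF mw_maker.prems mw_maker.hyps(1)])
  have p: "card (V - (M \<union> B)) > 0" by (rule rem_pos[OF mw_maker.prems mw_maker.hyps(1)])
  have "card S \<le> Suc (card M) + (card (V - (M \<union> B)) - 1) div 2"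
    using S(2) r card_ins_le[of v M] by linarith
  also have "\<dots> = card M + (card (V - (M \<union> B)) + 1) div 2" using p by linarith
  finally show ?case using S(1) by auto
next
  case (mw_breaker M B)
  from mw_breaker.hyps(1) obtain v where v: "v \<in> V - (M \<union> B)" by blast
  have ih: "maker_can_win V E k True M (insert v B) \<and> (finite V \<longrightarrow> (\<exists>S. dk_resolving V E k S \<and> card S \<le> card M +
      (if True then (card (V - (M \<union> insert v B)) + 1) div 2 else card (V - (M \<union> insert v B)) div 2)))"
    using mw_breaker.IH v by blast
  then obtain S where S: "dk_resolving V E k S"
    "card S \<le> card M + (card (V - (M \<union> insert v B)) + 1) div 2" using mw_breaker.prems by auto
  have r: "card (V - (M \<union> insert v B)) = card (V - (M \<union> B)) - 1"
    by (rule card_rem(2)[OF mw_breaker.prems v])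
  have p: "card (V - (M \<union> B)) > 0" by (rule rem_pos[OF mw_breaker.prems v])
  have "card S \<le> card M + card (V - (M \<union> B)) div 2" using S(2) r p by linarith
  then show ?case using S(1) by auto
qed

lemma breaker_bound:
  assumes "finite V"
  shows "\<forall>t M B. card (V - (M \<union> B)) = r \<longrightarrow>
     card M + (if t then (r + 1) div 2 else r div 2) < dim_k V E k \<longrightarrow> breaker_can_win V E k t M B"
proof (induction r)
  case 0
  show ?case
  proof (intro allI impI)
    fix t M B assume a: "card (V - (M \<union> B)) = 0"
      "card M + (if t then (0 + 1) div 2 else 0 div 2) < dim_k V E k"
    have e: "V - (M \<union> B) = {}" using a(1) assms by simp
    have "\<not> dk_resolving V E k M" using a(2) dim_le[of V E k M] by auto
    then show "breaker_can_win V E k t M B" using e by (rule bw_end[rotated])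
  qed
next
  case (Suc r)
  show ?case
  proof (intro allI impI)
    fix t M B assume a: "card (V - (M \<union> B)) = Suc r"
      "card M + (if t then (Suc r + 1) div 2 else Suc r div 2) < dim_k V E k"
    have ne: "V - (M \<union> B) \<noteq> {}" proof
      assume "V - (M \<union> B) = {}" then show False using a(1) by (simp only: card.empty)
    qed
    show "breaker_can_win V E k t M B"
    proof (cases t)
      case True
      have "\<forall>v \<in> V - (M \<union> B). breaker_can_win V E k False (insert v M) B"
      proof
        fix v assume v: "v \<in> V - (M \<union> B)"
        have r: "card (V - (insert v M \<union> B)) = r" using card_rem(1)[OF assms v] a(1) by simp
        have "card (insert v M) + r div 2 < dim_k V E k"
          using a(2) True card_ins_le[of v M] by simp
        then show "breaker_can_win V E k False (insert v M) B" using Suc.IH r by auto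
      qed
      then show ?thesis using True ne by (simp add: bw_maker)
    next
      case False
      obtain v where v: "v \<in> V - (M \<union> B)" using ne by blast
      have r: "card (V - (M \<union> insert v B)) = r" using card_rem(2)[OF assms v] a(1) by simp
      have "card M + (r + 1) div 2 < dim_k V E k" using a(2) False by simp
      then have "breaker_can_win V E k True M (insert v B)" using Suc.IH r by auto
      then show ?thesis using False v by (simp add: bw_breaker)
    qed
  qed
qed

theorem mainTheorem5:
  fixes V :: "'a set" and E :: "'a \<Rightarrow> 'a \<Rightarrow> bool" and k :: nat
  assumes "k \<ge> 1" and "simple_graph V E" and "connected_graph V E" and "card V \<ge> 2"
  shows "(outcome_M V E k \<longrightarrow> dim_k V E k \<le> card V div 2)
       \<and> (dim_k V E k \<ge> (card V + 1) div 2 + 1 \<longrightarrow> outcome_B V E k)"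
proof
  have fin: "finite V" using assms(2) unfolding simple_graph_def by blast
  show "outcome_M V E k \<longrightarrow> dim_k V E k \<le> card V div 2"
  proof
    assume "outcome_M V E k"
    then have "maker_can_win V E k False {} {}" unfolding outcome_M_def by blast
    from maker_bound[OF this fin] obtain S where "dk_resolving V E k S" "card S \<le> card V div 2"
      by auto
    then show "dim_k V E k \<le> card V div 2" using dim_le[of V E k S] by linarith
  qed
  show "dim_k V E k \<ge> (card V + 1) div 2 + 1 \<longrightarrow> outcome_B V E k"
  proof
    assume d: "dim_k V E k \<ge> (card V + 1) div 2 + 1"
    have bb: "\<forall>t M B. card (V - (M \<union> B)) = card V \<longrightarrow>
     card M + (if t then (card V + 1) div 2 else card V div 2) < dim_k V E k \<longrightarrow> breaker_can_win V E k t M B"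
      by (rule breaker_bound[OF fin])
    have "breaker_can_win V E k False {} {}" using spec[OF spec[OF spec[OF bb, of False], of "{}"], of "{}"] d by simp
    moreover have "breaker_can_win V E k True {} {}" using spec[OF spec[OF spec[OF bb, of True], of "{}"], of "{}"] d by simp
    ultimately show "outcome_B V E k" unfolding outcome_B_def by blast
  qed
qed

end
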